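(* Let $x$ be a stable g-matching with $x\ne x^{\max}$, let $w\in W$, and let $(c,a)$ be a legal $w$-pair under $x$. Let $d\in (U_F^+(x)\cap E_w)\setminus\{a\}$ be interesting for $w$ under $z:=x_w+\mathbf 1^a-\mathbf 1^c$. Then $(c,d)$ is a legal $w$-pair under $x$ and $x_w+\mathbf 1^d-\mathbf 1^c\succ_w z$.
   Context: Let $G=(V,E)$ be a finite bipartite graph with color classes $W$ and $F$; the edge joining $w\in W$ and $f\in F$ is written $wf$. Let $b\in\mathbb Z_+^E$ be capacities. For $v\in V$, $E_v$ is the set of edges at $v$, $\mathcal B_v=\{z\in\mathbb Z_+^{E_v}: z\le b|_{E_v}\}$, $\mathbf 1^e$ the unit vector of $e$, $|z|=\sum_e|z(e)|$, $\wedge,\vee$ componentwise min/max. Each $v$ has a choice function $C_v:\mathcal B_v\to\mathcal B_v$ with $C_v(z)\le z$ and, for all $z,z'$: (A1) $z\ge z'\ge C_v(z)\Rightarrow C_v(z')=C_v(z)$; (A2) $z\ge z'\Rightarrow C_v(z)\wedge z'\le C_v(z')$; (A3) $z\ge z'\Rightarrow|C_v(z)|\ge|C_v(z')|$. $z$ is acceptable if $C_v(z)=z$; for distinct acceptable $z,z'$, $z'\prec_v z$ (i.e. $z\succ_v z'$) iff $C_v(z\vee z')=z$. $x_v$ = restriction of $x$ to $E_v$. A g-matching is $x\in\mathbb Z_+^E$, $x\le b$, each $x_v$ acceptable; $x\prec_F y$ (distinct) iff $x_f\preceq_f y_f$ for all $f\in F$. $e\in E_v$ is interesting for $v$ under acceptable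 $z$ if some $z'\in\mathcal B_v$ has $z'(e)>z(e)$, $z'(e')=z(e')$ for $e'\neq e$, $C_v(z')(e)>z(e)$; $e=wf$ is interesting for $v\in\{w,f\}$ under a g-matching $x$ if so under $x_v$, and blocks $x$ if interesting for both endpoints; stable g-matchings (no blocking edge) form a finite lattice under $\prec_F$ with maximum $x^{\max}$. For stable $x$: $U_F^+(x)$ = edges $wf$ interesting for $f$ under $x$; $U_F^-(x)$ = edges $wf$ with $x(wf)>0$ not interesting for $f$ under $x$. For $w\in W$, a legal $w$-pair under $x$ is $(c,a)$ with $c\in U_F^-(x)\cap E_w$, $a\in U_F^+(x)\cap E_w$ and $C_w(x_w+\mathbf 1^a-\mathbf 1^c)=x_w+\mathbf 1^a-\mathbf 1^c$. *)

theory Defs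
  imports Main
begin

(* Vertices have type 'v; an edge wf (w in W, f in F) is the pair (w,f).
   Vectors in Z_+^E (or Z_+^{E_v}) are functions 'v*'v => nat that vanish
   outside E (resp. E_v). *)

type_synonym 'v vec = "'v \<times> 'v \<Rightarrow> nat"
type_synonym 'v choice = "'v \<Rightarrow> 'v vec \<Rightarrow> 'v vec"

definition Ev :: "('v \<times> 'v) set \<Rightarrow> 'v \<Rightarrow> ('v \<times> 'v) set" where
  "Ev E v = {e \<in> E. fst e = v \<or> snd e = v}"

definition Bv :: "('v \<times> 'v) set \<Rightarrow> 'v vec \<Rightarrow> 'v \<Rightarrow> 'v vec set" where
  "Bv E b v = {z. (\<forall>e. e \<notin> Ev E v \<longrightarrow> z e = 0) \<and> (\<forall>e \<in> Ev E v. z e \<le> b e)}"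

definition vsize :: "('v \<times> 'v) set \<Rightarrow> 'v \<Rightarrow> 'v vec \<Rightarrow> nat" where
  "vsize E v z = (\<Sum>e \<in> Ev E v. z e)"

definition unitv :: "'v \<times> 'v \<Rightarrow> 'v vec" where
  "unitv e = (\<lambda>e'. if e' = e then 1 else 0)"

definition restr :: "('v \<times> 'v) set \<Rightarrow> 'v vec \<Rightarrow> 'v \<Rightarrow> 'v vec" where
  "restr E x v = (\<lambda>e. if e \<in> Ev E v then x e else 0)"

definition choice_fun :: "('v \<times> 'v) set \<Rightarrow> 'v vec \<Rightarrow> 'v \<Rightarrow> ('v vec \<Rightarrow> 'v vec) \<Rightarrow> bool" where
  "choice_fun E b v Cv \<longleftrightarrow>
     (\<forall>z \<in> Bv E b v. Cv z \<in> Bv E b v \<and> Cv z \<le> z) \<and>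
     (\<forall>z \<in> Bv E b v. \<forall>z' \<in> Bv E b v. z \<ge> z' \<and> z' \<ge> Cv z \<longrightarrow> Cv z' = Cv z) \<and>
     (\<forall>z \<in> Bv E b v. \<forall>z' \<in> Bv E b v. z \<ge> z' \<longrightarrow> inf (Cv z) z' \<le> Cv z') \<and>
     (\<forall>z \<in> Bv E b v. \<forall>z' \<in> Bv E b v. z \<ge> z' \<longrightarrow> vsize E v (Cv z) \<ge> vsize E v (Cv z'))"

definition gm_setting :: "'v set \<Rightarrow> 'v set \<Rightarrow> ('v \<times> 'v) set \<Rightarrow> 'v vec \<Rightarrow> 'v choice \<Rightarrow> bool" where
  "gm_setting W F E b C \<longleftrightarrow>
     finite W \<and> finite F \<and> W \<inter> F = {} \<and> E \<subseteq> W \<times> F \<and>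
     (\<forall>e. e \<notin> E \<longrightarrow> b e = 0) \<and>
     (\<forall>v \<in> W \<union> F. choice_fun E b v (C v))"

definition acceptable :: "('v \<times> 'v) set \<Rightarrow> 'v vec \<Rightarrow> 'v choice \<Rightarrow> 'v \<Rightarrow> 'v vec \<Rightarrow> bool" where
  "acceptable E b C v z \<longleftrightarrow> z \<in> Bv E b v \<and> C v z = z"

definition prefers :: "('v \<times> 'v) set \<Rightarrow> 'v vec \<Rightarrow> 'v choice \<Rightarrow> 'v \<Rightarrow> 'v vec \<Rightarrow> 'v vec \<Rightarrow> bool" where
  "prefers E b C v z z' \<longleftrightarrow>
     acceptable E b C v z \<and> acceptable E b C v z' \<and> z \<noteq> z' \<and> C v (sup z z') = z"

definition gmatching :: "'v set \<Rightarrow> 'v set \<Rightarrow> ('v \<times> 'v) set \<Rightarrow> 'v vec \<Rightarrow> 'v choice \<Rightarrow> 'v vec \<Rightarrow> bool" where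
  "gmatching W F E b C x \<longleftrightarrow>
     (\<forall>e. e \<notin> E \<longrightarrow> x e = 0) \<and> x \<le> b \<and>
     (\<forall>v \<in> W \<union> F. acceptable E b C v (restr E x v))"

definition F_le :: "'v set \<Rightarrow> ('v \<times> 'v) set \<Rightarrow> 'v vec \<Rightarrow> 'v choice \<Rightarrow> 'v vec \<Rightarrow> 'v vec \<Rightarrow> bool" where
  "F_le F E b C x y \<longleftrightarrow> x = y \<or>
     (\<forall>f \<in> F. restr E x f = restr E y f \<or> prefers E b C f (restr E y f) (restr E x f))"

definition interesting :: "('v \<times> 'v) set \<Rightarrow> 'v vec \<Rightarrow> 'v choice \<Rightarrow> 'v \<Rightarrow> 'v \<times> 'v \<Rightarrow> 'v vec \<Rightarrow> bool" where
  "interesting E b C v e z \<longleftrightarrow> e \<in> Ev E v \<and>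
     (\<exists>z' \<in> Bv E b v. z' e > z e \<and> (\<forall>e'. e' \<noteq> e \<longrightarrow> z' e' = z e') \<and> C v z' e > z e)"

definition blocks :: "('v \<times> 'v) set \<Rightarrow> 'v vec \<Rightarrow> 'v choice \<Rightarrow> 'v vec \<Rightarrow> 'v \<times> 'v \<Rightarrow> bool" where
  "blocks E b C x e \<longleftrightarrow> e \<in> E \<and>
     interesting E b C (fst e) e (restr E x (fst e)) \<and>
     interesting E b C (snd e) e (restr E x (snd e))"

definition stable :: "'v set \<Rightarrow> 'v set \<Rightarrow> ('v \<times> 'v) set \<Rightarrow> 'v vec \<Rightarrow> 'v choice \<Rightarrow> 'v vec \<Rightarrow> bool" where
  "stable W F E b C x \<longleftrightarrow> gmatching W F E b C x \<and> (\<forall>e \<in> E. \<not> blocks E b C x e)"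

definition is_xmax :: "'v set \<Rightarrow> 'v set \<Rightarrow> ('v \<times> 'v) set \<Rightarrow> 'v vec \<Rightarrow> 'v choice \<Rightarrow> 'v vec \<Rightarrow> bool" where
  "is_xmax W F E b C y \<longleftrightarrow> stable W F E b C y \<and>
     (\<forall>x. stable W F E b C x \<longrightarrow> F_le F E b C x y)"

definition UFplus :: "('v \<times> 'v) set \<Rightarrow> 'v vec \<Rightarrow> 'v choice \<Rightarrow> 'v vec \<Rightarrow> ('v \<times> 'v) set" where
  "UFplus E b C x = {e \<in> E. interesting E b C (snd e) e (restr E x (snd e))}"

definition UFminus :: "('v \<times> 'v) set \<Rightarrow> 'v vec \<Rightarrow> 'v choice \<Rightarrow> 'v vec \<Rightarrow> ('v \<times> 'v) set" where
  "UFminus E b C x = {e \<in> E. x e > 0 \<and> \<not> interesting E b C (snd e) e (restr E x (snd e))}"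

definition swapv :: "('v \<times> 'v) set \<Rightarrow> 'v vec \<Rightarrow> 'v \<Rightarrow> 'v \<times> 'v \<Rightarrow> 'v \<times> 'v \<Rightarrow> 'v vec" where
  "swapv E x w a c = (\<lambda>e. restr E x w e + unitv a e - unitv c e)"

definition legal_pair :: "('v \<times> 'v) set \<Rightarrow> 'v vec \<Rightarrow> 'v choice \<Rightarrow> 'v vec \<Rightarrow> 'v \<Rightarrow> 'v \<times> 'v \<Rightarrow> 'v \<times> 'v \<Rightarrow> bool" where
  "legal_pair E b C x w c a \<longleftrightarrow>
     c \<in> UFminus E b C x \<inter> Ev E w \<and> a \<in> UFplus E b C x \<inter> Ev E w \<and>
     swapv E x w a c \<in> Bv E b w \<and> C w (swapv E x w a c) = swapv E x w a c"

end

theory Submission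
  imports Defs
begin

lemma sum_unitv: "finite S \<Longrightarrow> c \<in> S \<Longrightarrow> sum (unitv c) S = 1"
  unfolding unitv_def by simp

theorem lemma3p3:
  assumes setting: "gm_setting W F E b C"
    and stab: "stable W F E b C x"
    and xmax: "is_xmax W F E b C xm"
    and ne: "x \<noteq> xm"
    and wW: "w \<in> W"
    and legal: "legal_pair E b C x w c a"
    and d_plus: "d \<in> (UFplus E b C x \<inter> Ev E w) - {a}"
    and d_int: "interesting E b C w d (swapv E x w a c)"
  shows "legal_pair E b C x w c d \<and>
         prefers E b C w (swapv E x w d c) (swapv E x w a c)"
proof -
  define B where "B = Bv E b w"
  define Cw where "Cw = C w"
  define xw where "xw = restr E x w"
  have cf: "choice_fun E b w Cw" using setting wW unfolding gm_setting_def Cw_def by blast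
  have cfs: "(\<forall>z \<in> B. Cw z \<in> B \<and> Cw z \<le> z) \<and>
     (\<forall>z \<in> B. \<forall>z' \<in> B. z \<ge> z' \<and> z' \<ge> Cw z \<longrightarrow> Cw z' = Cw z) \<and>
     (\<forall>z \<in> B. \<forall>z' \<in> B. z \<ge> z' \<longrightarrow> inf (Cw z) z' \<le> Cw z') \<and>
     (\<forall>z \<in> B. \<forall>z' \<in> B. z \<ge> z' \<longrightarrow> vsize E w (Cw z) \<ge> vsize E w (Cw z'))"
    using cf unfolding choice_fun_def B_def .
  have A0: "\<And>z. z \<in> B \<Longrightarrow> Cw z \<in> B \<and> Cw z \<le> z" using conjunct1[OF cfs] by blast
  have A1: "\<And>z z'. z \<in> B \<Longrightarrow> z' \<in> B \<Longrightarrow> z' \<le> z \<Longrightarrow> Cw z \<le> z' \<Longrightarrow> Cw z' = Cw z"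
    using conjunct1[OF conjunct2[OF cfs]] by blast
  have A2: "\<And>z z'. z \<in> B \<Longrightarrow> z' \<in> B \<Longrightarrow> z' \<le> z \<Longrightarrow> inf (Cw z) z' \<le> Cw z'"
    using conjunct1[OF conjunct2[OF conjunct2[OF cfs]]] by blast
  have A3: "\<And>z z'. z \<in> B \<Longrightarrow> z' \<in> B \<Longrightarrow> z' \<le> z \<Longrightarrow> vsize E w (Cw z') \<le> vsize E w (Cw z)"
    using conjunct2[OF conjunct2[OF conjunct2[OF cfs]]] by blast
  have Einc: "E \<subseteq> W \<times> F" and WF: "W \<inter> F = {}" and finW: "finite W" and finF: "finite F"
    using setting unfolding gm_setting_def by auto
  have finEv: "finite (Ev E w)"
  proof -
    have "Ev E w \<subseteq> W \<times> F" using Einc unfolding Ev_def by auto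
    thus ?thesis using finW finF finite_subset by blast
  qed
  have gm: "gmatching W F E b C x" and nob: "\<forall>e\<in>E. \<not> blocks E b C x e"
    using stab unfolding stable_def by auto
  have xwacc: "xw \<in> B" "Cw xw = xw"
    using gm wW unfolding gmatching_def acceptable_def xw_def B_def Cw_def by auto
  have fstw: "\<And>e. e \<in> Ev E w \<Longrightarrow> fst e = w"
  proof -
    fix e assume "e \<in> Ev E w"
    then have "e \<in> E" "fst e = w \<or> snd e = w" unfolding Ev_def by auto
    then have "snd e \<in> F" using Einc by auto
    then have "snd e \<noteq> w" using WF wW by blast
    then show "fst e = w" using \<open>fst e = w \<or> snd e = w\<close> by simp
  qed
  have cE: "c \<in> Ev E w" and cpos: "x c > 0" and cnot: "\<not> interesting E b C (snd c) c (restr E x (snd c))"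
    and aE: "a \<in> Ev E w" and aint: "interesting E b C (snd a) a (restr E x (snd a))"
    and zB: "swapv E x w a c \<in> B" and zacc: "Cw (swapv E x w a c) = swapv E x w a c"
    using legal unfolding legal_pair_def UFminus_def UFplus_def B_def Cw_def by auto
  have dE: "d \<in> Ev E w" and dint: "interesting E b C (snd d) d (restr E x (snd d))" and da: "d \<noteq> a"
    using d_plus unfolding UFplus_def by auto
  have ca: "c \<noteq> a" using cnot aint by metis
  have cd: "c \<noteq> d" using cnot dint by metis
  have xwc: "xw c \<ge> 1" using cpos cE unfolding xw_def restr_def by auto
  have anotw: "\<not> interesting E b C w a xw"
  proof -
    have inE: "a \<in> E" using aE unfolding Ev_def by blast
    have "\<not> blocks E b C x a" using nob inE by blast
    then show ?thesis unfolding blocks_def using inE fstw[OF aE] aint xw_def by simp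
  qed
  have dnotw: "\<not> interesting E b C w d xw"
  proof -
    have inE: "d \<in> E" using dE unfolding Ev_def by blast
    have "\<not> blocks E b C x d" using nob inE by blast
    then show ?thesis unfolding blocks_def using inE fstw[OF dE] dint xw_def by simp
  qed
  have Bchar: "\<And>f. f \<in> B \<longleftrightarrow> (\<forall>e. e \<notin> Ev E w \<longrightarrow> f e = 0) \<and> (\<forall>e\<in>Ev E w. f e \<le> b e)"
    unfolding B_def Bv_def by auto
  have Ble: "\<And>f e. f \<in> B \<Longrightarrow> e \<in> Ev E w \<Longrightarrow> f e \<le> b e" unfolding Bchar by blast
  have B0: "\<And>f e. f \<in> B \<Longrightarrow> e \<notin> Ev E w \<Longrightarrow> f e = 0" unfolding Bchar by blast
  have BI: "\<And>f. (\<And>e. e \<notin> Ev E w \<Longrightarrow> f e = 0) \<Longrightarrow> (\<And>e. e \<in> Ev E w \<Longrightarrow> f e \<le> b e) \<Longrightarrow> f \<in> B"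
    unfolding Bchar by blast
  define z where "z = swapv E x w a c"
  have zval: "\<And>e. z e = xw e + unitv a e - unitv c e" unfolding z_def swapv_def xw_def by simp
  obtain z2 where z2B: "z2 \<in> B" and z2d: "z2 d > z d" and z2o: "\<forall>e'. e' \<noteq> d \<longrightarrow> z2 e' = z e'"
    and z2C: "Cw z2 d > z d"
    using d_int unfolding interesting_def z_def B_def Cw_def by blast
  have zd: "z d = xw d" using zval da cd unfolding unitv_def by simp
  have bd: "xw d + 1 \<le> b d" using Ble[OF z2B dE] z2d zd by simp
  have ba: "xw a + 1 \<le> b a"
  proof -
    have "z a \<le> b a" using Ble[OF zB aE] unfolding z_def .
    moreover have "z a = xw a + 1" using zval[of a] ca by (simp add: unitv_def)
    ultimately show ?thesis by simp
  qed
  have xwB: "\<And>e. e \<notin> Ev E w \<Longrightarrow> xw e = 0" "\<And>e. e \<in> Ev E w \<Longrightarrow> xw e \<le> b e"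
    using B0[OF xwacc(1)] Ble[OF xwacc(1)] by auto
  define X1a where "X1a = (\<lambda>e. xw e + unitv a e)"
  define X1d where "X1d = (\<lambda>e. xw e + unitv d e)"
  define Y where "Y = (\<lambda>e. xw e + unitv a e + unitv d e)"
  define y where "y = (\<lambda>e. xw e + unitv a e + unitv d e - unitv c e)"
  define zp where "zp = swapv E x w d c"
  have zpval: "\<And>e. zp e = xw e + unitv d e - unitv c e" unfolding zp_def swapv_def xw_def by simp
  have X1aB: "X1a \<in> B"
  proof (rule BI)
    fix e assume "e \<notin> Ev E w" then show "X1a e = 0" using xwB(1) aE dE cE by (auto simp: X1a_def unitv_def)
  next
    fix e assume h: "e \<in> Ev E w"
    have "xw e \<le> b e" using xwB(2)[OF h] .
    then show "X1a e \<le> b e" using bd ba da by (auto simp: X1a_def unitv_def)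
  qed
  have X1dB: "X1d \<in> B"
  proof (rule BI)
    fix e assume "e \<notin> Ev E w" then show "X1d e = 0" using xwB(1) aE dE cE by (auto simp: X1d_def unitv_def)
  next
    fix e assume h: "e \<in> Ev E w"
    have "xw e \<le> b e" using xwB(2)[OF h] .
    then show "X1d e \<le> b e" using bd ba da by (auto simp: X1d_def unitv_def)
  qed
  have YB: "Y \<in> B"
  proof (rule BI)
    fix e assume "e \<notin> Ev E w" then show "Y e = 0" using xwB(1) aE dE cE by (auto simp: Y_def unitv_def)
  next
    fix e assume h: "e \<in> Ev E w"
    have "xw e \<le> b e" using xwB(2)[OF h] .
    then show "Y e \<le> b e" using bd ba da by (auto simp: Y_def unitv_def)
  qed
  have yB: "y \<in> B"
  proof (rule BI)
    fix e assume "e \<notin> Ev E w" then show "y e = 0" using xwB(1) aE dE cE by (auto simp: y_def unitv_def)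
  next
    fix e assume h: "e \<in> Ev E w"
    have "xw e \<le> b e" using xwB(2)[OF h] .
    then show "y e \<le> b e" using bd ba da by (auto simp: y_def unitv_def)
  qed
  have zpB: "zp \<in> B"
  proof (rule BI)
    fix e assume "e \<notin> Ev E w" then show "zp e = 0" using xwB(1) aE dE cE by (auto simp: zpval unitv_def)
  next
    fix e assume h: "e \<in> Ev E w"
    have "xw e \<le> b e" using xwB(2)[OF h] .
    then show "zp e \<le> b e" using bd ba da by (auto simp: zpval unitv_def)
  qed
  have xwX1a: "xw \<le> X1a" unfolding X1a_def le_fun_def by simp
  have xwX1d: "xw \<le> X1d" unfolding X1d_def le_fun_def by simp
  have CX1a_a: "Cw X1a a \<le> xw a"
  proof (rule ccontr)
    assume "\<not> ?thesis"
    then have "interesting E b C w a xw"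
    proof -
      have "X1a \<in> Bv E b w" using X1aB unfolding B_def .
      moreover have "X1a a > xw a" by (simp add: X1a_def unitv_def)
      moreover have "\<forall>e'. e' \<noteq> a \<longrightarrow> X1a e' = xw e'" by (simp add: X1a_def unitv_def)
      moreover have "C w X1a a > xw a" using \<open>\<not> Cw X1a a \<le> xw a\<close> unfolding Cw_def by simp
      ultimately show ?thesis unfolding interesting_def using aE by blast
    qed
    then show False using anotw by simp
  qed
  have CX1d_d: "Cw X1d d \<le> xw d"
  proof (rule ccontr)
    assume "\<not> ?thesis"
    then have "interesting E b C w d xw"
    proof -
      have "X1d \<in> Bv E b w" using X1dB unfolding B_def .
      moreover have "X1d d > xw d" by (simp add: X1d_def unitv_def)
      moreover have "\<forall>e'. e' \<noteq> d \<longrightarrow> X1d e' = xw e'" by (simp add: X1d_def unitv_def)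
      moreover have "C w X1d d > xw d" using \<open>\<not> Cw X1d d \<le> xw d\<close> unfolding Cw_def by simp
      ultimately show ?thesis unfolding interesting_def using dE by blast
    qed
    then show False using dnotw by simp
  qed
  have CX1a: "Cw X1a = xw"
  proof -
    have "Cw X1a \<le> xw"
      unfolding le_fun_def
    proof
      fix e show "Cw X1a e \<le> xw e"
      proof (cases "e = a")
        case True then show ?thesis using CX1a_a by simp
      next
        case False
        have "Cw X1a e \<le> X1a e" using conjunct2[OF A0[OF X1aB]] by (rule le_funD)
        then show ?thesis using False by (simp add: X1a_def unitv_def)
      qed
    qed
    then have "Cw xw = Cw X1a" using A1[OF X1aB xwacc(1) xwX1a] by simp
    then show ?thesis using xwacc(2) by simp
  qed
  have CX1d: "Cw X1d = xw"
  proof -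
    have "Cw X1d \<le> xw"
      unfolding le_fun_def
    proof
      fix e show "Cw X1d e \<le> xw e"
      proof (cases "e = d")
        case True then show ?thesis using CX1d_d by simp
      next
        case False
        have "Cw X1d e \<le> X1d e" using conjunct2[OF A0[OF X1dB]] by (rule le_funD)
        then show ?thesis using False by (simp add: X1d_def unitv_def)
      qed
    qed
    then have "Cw xw = Cw X1d" using A1[OF X1dB xwacc(1) xwX1d] by simp
    then show ?thesis using xwacc(2) by simp
  qed
  have CYa: "Cw Y a \<le> xw a"
  proof -
    have "X1a \<le> Y" unfolding X1a_def Y_def le_fun_def by simp
    from le_funD[OF A2[OF YB X1aB this], of a] CX1a have "min (Cw Y a) (X1a a) \<le> xw a"
      by (simp add: inf_min)
    then show ?thesis by (simp add: X1a_def unitv_def)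
  qed
  have CYd: "Cw Y d \<le> xw d"
  proof -
    have "X1d \<le> Y" unfolding X1d_def Y_def le_fun_def by simp
    from le_funD[OF A2[OF YB X1dB this], of d] CX1d have "min (Cw Y d) (X1d d) \<le> xw d"
      by (simp add: inf_min)
    then show ?thesis by (simp add: X1d_def unitv_def)
  qed
  have CY: "Cw Y = xw"
  proof -
    have "Cw Y \<le> xw"
      unfolding le_fun_def
    proof
      fix e show "Cw Y e \<le> xw e"
      proof (cases "e = a \<or> e = d")
        case True then show ?thesis using CYa CYd by auto
      next
        case False
        have "Cw Y e \<le> Y e" using conjunct2[OF A0[OF YB]] by (rule le_funD)
        then show ?thesis using False by (simp add: Y_def unitv_def)
      qed
    qed
    moreover have "xw \<le> Y" unfolding Y_def le_fun_def by simp
    ultimately have "Cw xw = Cw Y" using A1[OF YB xwacc(1)] by simp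
    then show ?thesis using xwacc(2) by simp
  qed
  have yY: "y \<le> Y" unfolding y_def Y_def le_fun_def by simp
  have infy: "inf xw y \<le> Cw y" using A2[OF YB yB yY] CY by simp
  have Cyd: "Cw y d \<ge> y d"
  proof -
    have "y \<le> z2" unfolding le_fun_def
    proof
      fix e show "y e \<le> z2 e"
      proof (cases "e = d")
        case True then show ?thesis using z2d zd da cd by (simp add: y_def unitv_def)
      next
        case False
        have "z2 e = z e" using z2o False by blast
        then show ?thesis using ca cd False by (simp add: y_def zval unitv_def)
      qed
    qed
    from le_funD[OF A2[OF z2B yB this], of d] have "min (Cw z2 d) (y d) \<le> Cw y d"
      by (simp add: inf_min)
    moreover have "y d = z d + 1" using zd da cd by (simp add: y_def unitv_def)
    ultimately show ?thesis using z2C by simp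
  qed
  have zpCy: "zp \<le> Cw y" unfolding le_fun_def
  proof
    fix e show "zp e \<le> Cw y e"
    proof (cases "e = d")
      case True then show ?thesis using Cyd cd da by (simp add: zpval y_def unitv_def)
    next
      case False
      have "inf xw y e \<le> Cw y e" using le_funD[OF infy, of e] .
      then show ?thesis using False xwc by (simp add: zpval y_def unitv_def inf_min split: if_splits)
    qed
  qed
  have sz1: "vsize E w (Cw y) \<le> vsize E w xw" using A3[OF YB yB yY] CY by simp
  have sz2: "vsize E w zp = vsize E w xw"
  proof -
    have eq: "\<And>e. zp e + unitv c e = xw e + unitv d e"
      using xwc cd by (simp add: zpval unitv_def)
    have "vsize E w zp + 1 = (\<Sum>e\<in>Ev E w. zp e + unitv c e)"
      unfolding vsize_def sum.distrib using sum_unitv[OF finEv cE] by simp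
    also have "\<dots> = (\<Sum>e\<in>Ev E w. xw e + unitv d e)" using eq by simp
    also have "\<dots> = vsize E w xw + 1"
      unfolding vsize_def sum.distrib using sum_unitv[OF finEv dE] by simp
    finally show ?thesis by simp
  qed
  have Cy: "Cw y = zp"
  proof (rule ccontr)
    assume neq: "Cw y \<noteq> zp"
    have CyB: "Cw y \<in> B" using A0[OF yB] by simp
    obtain e where "Cw y e \<noteq> zp e" using neq by blast
    then have gt: "Cw y e > zp e" using le_funD[OF zpCy, of e] by simp
    have eEv: "e \<in> Ev E w"
    proof (rule ccontr)
      assume "e \<notin> Ev E w" then show False using gt B0[OF CyB] B0[OF zpB] by auto
    qed
    have "vsize E w zp < vsize E w (Cw y)"
      unfolding vsize_def
      by (rule sum_strict_mono_ex1[OF finEv]) (use le_funD[OF zpCy] gt eEv in \<open>auto\<close>)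
    then show False using sz1 sz2 by simp
  qed
  have Czp: "Cw zp = zp"
  proof -
    have "zp \<le> y" using zpCy Cy A0[OF yB] by simp
    then have "Cw zp = Cw y" using A1[OF yB zpB] Cy by simp
    then show ?thesis using Cy by simp
  qed
  have supy: "sup zp z = y"
    by (rule ext) (use xwc ca cd da in \<open>auto simp: sup_max zpval zval y_def unitv_def\<close>)
  have zpz: "zp \<noteq> z"
  proof
    assume "zp = z"
    then have "zp a = z a" by simp
    then show False using ca da by (simp add: zpval zval unitv_def)
  qed
  show ?thesis
  proof -
    have l1: "c \<in> UFminus E b C x \<inter> Ev E w" using legal unfolding legal_pair_def by blast
    have l2: "d \<in> UFplus E b C x \<inter> Ev E w" using d_plus by blast
    have p1: "zp \<in> Bv E b w" "C w zp = zp" using zpB Czp unfolding B_def Cw_def by auto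
    have p2: "z \<in> Bv E b w" "C w z = z" using zB zacc unfolding B_def Cw_def z_def by auto
    have p3: "C w (sup zp z) = zp" using supy Cy unfolding Cw_def by simp
    have "legal_pair E b C x w c d" unfolding legal_pair_def using l1 l2 p1 unfolding zp_def by blast
    moreover have "prefers E b C w zp z" unfolding prefers_def acceptable_def using p1 p2 p3 zpz by blast
    ultimately show ?thesis unfolding zp_def z_def by blast
  qed
qed

end
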